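(* Let $p,q$ be integers with $1+|p|<|q|$. Then $\mathrm{Dom}_{p,q}$ is a regular language, and $\psi_{p,q}:\mathrm{Dom}_{p,q}\to\mathbb{Z}^2$ is an FA-presentation of $(\mathbb{Z}^2,+)$, i.e. the relation $\{(u,v,w)\in\mathrm{Dom}_{p,q}^3:\psi_{p,q}(u)+\psi_{p,q}(v)=\psi_{p,q}(w)\}$ is FA-recognizable. Moreover, if $\gcd(p,q)=1$, then neither of the languages $\psi_{p,q}^{-1}(\langle\xi\rangle)$, $\psi_{p,q}^{-1}(\langle\eta\rangle)$ is regular, and neither of the relations $\{(u,v):\psi_{p,q}(v)=\pi_\xi(\psi_{p,q}(u))\}$, $\{(u,v):\psi_{p,q}(v)=\pi_\eta(\psi_{p,q}(u))\}$ is FA-recognizable, where $\pi_\xi,\pi_\eta:\mathbb{Z}^2\to\mathbb{Z}^2$ are the projections $[sx+r]_\sim\mapsto[r]_\sim$ and $[sx+r]_\sim\mapsto[sx]_\sim$ onto the components of $\mathbb{Z}^2=\langle\eta\rangle\oplus\langle\xi\rangle$.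
   Context: Let $p,q$ be integers with $1+|p|<|q|$ and $t(x)=x^2+px-q$. For $f,g\in\mathbb{Z}[x]$ write $f\sim g$ if $t$ divides $f-g$; identify $\mathbb{Z}^2$ with the additive group of $\mathbb{Z}[x]/\langle t\rangle$ via $(h_1,h_2)\mapsto[h_1x+h_2]_\sim$, and put $\eta=[x]_\sim$, $\xi=[1]_\sim$. A polynomial $\sum a_ix^i$ is reduced if $|a_i|<|q|$ for all $i$. Let $\Sigma_q=\{-(|q|-1),\dots,|q|-1\}$ with the order $-(|q|-1)<\dots<|q|-1$; a string $a_0a_1\dots a_n\in\Sigma_q^*$ represents the reduced polynomial $a_nx^n+\dots+a_1x+a_0$, and two strings are equivalent if their polynomials are $\sim$-equivalent. $\mathrm{Dom}_{p,q}$ is the set of $w\in\Sigma_q^*$ such that no string $u$ strictly smaller than $w$ in the length-lexicographic order on $\Sigma_q^*$ is equivalent to $w$, and $\psi_{p,q}:\mathrm{Dom}_{p,q}\to\mathbb{Z}^2$ sends $w$ to the $\sim$-class of the polynomial it represents. For strings $w_1,\dots,w_m$ over an alphabet $\Sigma$, their convolution $w_1\otimes\dots\otimes w_m$ is the string over $(\Sigma\cup\{\diamond\})^m$ of length $\max|w_i|$ whose $k$-th letter is the column $(\sigma_1,\dots,\sigma_m)$, $\sigma_i$ being the $k$-th letter of $w_i$ if $k\le|w_i|$ and the padding symbol $\diamond$ otherwise. A relation $R\subseteq(\Sigma^* )^m$ is FA-recognizable if $\{w_1\otimes\dots\otimes w_m:(w_1,\dots,w_m)\in R\}$ is accepted by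 a finite automaton; a function is FA-recognizable if its graph is. *)

theory Defs
  imports "HOL-Computational_Algebra.Polynomial"
begin

definition fa_recognizable :: "'a set \<Rightarrow> 'a list set \<Rightarrow> bool" where
  "fa_recognizable A L \<longleftrightarrow> finite A \<and> L \<subseteq> lists A \<and>
     (\<exists>(Q::nat set) s \<delta> F. finite Q \<and> s \<in> Q \<and> (\<forall>st\<in>Q. \<forall>a\<in>A. \<delta> st a \<in> Q) \<and> F \<subseteq> Q \<and>
        (\<forall>w\<in>lists A. w \<in> L \<longleftrightarrow> fold (\<lambda>a st. \<delta> st a) w s \<in> F))"

definition convolution :: "'a list list \<Rightarrow> 'a option list list" where
  "convolution ws = map (\<lambda>k. map (\<lambda>w. if k < length w then Some (w ! k) else None) ws)
                        [0..<foldr (\<lambda>w m. max (length w) m) ws 0]"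

definition conv_alphabet :: "'a set \<Rightarrow> nat \<Rightarrow> 'a option list set" where
  "conv_alphabet A m = {c. length c = m \<and> set c \<subseteq> insert None (Some ` A)}"

definition fa_rel_recognizable :: "'a set \<Rightarrow> nat \<Rightarrow> 'a list list set \<Rightarrow> bool" where
  "fa_rel_recognizable A m R \<longleftrightarrow> fa_recognizable (conv_alphabet A m) (convolution ` R)"

definition tpoly :: "int \<Rightarrow> int \<Rightarrow> int poly" where
  "tpoly p q = [:-q, p, 1:]"

definition sim :: "int \<Rightarrow> int \<Rightarrow> int poly \<Rightarrow> int poly \<Rightarrow> bool" where
  "sim p q f g \<longleftrightarrow> tpoly p q dvd (f - g)"

definition Sigma_q :: "int \<Rightarrow> int set" where
  "Sigma_q q = {-(\<bar>q\<bar> - 1) .. \<bar>q\<bar> - 1}"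

text \<open>The string a0 a1 ... an represents a_n x^n + ... + a_0 (Poly takes coefficients low first).\<close>
definition str_equiv :: "int \<Rightarrow> int \<Rightarrow> int list \<Rightarrow> int list \<Rightarrow> bool" where
  "str_equiv p q u w \<longleftrightarrow> sim p q (Poly u) (Poly w)"

definition llex_less :: "int list \<Rightarrow> int list \<Rightarrow> bool" where
  "llex_less u w \<longleftrightarrow> (u, w) \<in> lenlex {(a, b). a < b}"

definition Dom :: "int \<Rightarrow> int \<Rightarrow> int list set" where
  "Dom p q = {w \<in> lists (Sigma_q q). \<not> (\<exists>u \<in> lists (Sigma_q q). llex_less u w \<and> str_equiv p q u w)}"

text \<open>Z^2 identified with Z[x]/<t> via (h1,h2) \<mapsto> [h1 x + h2].\<close>
definition psi :: "int \<Rightarrow> int \<Rightarrow> int list \<Rightarrow> int \<times> int" where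
  "psi p q w = (THE h. sim p q [:snd h, fst h:] (Poly w))"

definition addZ2 :: "int \<times> int \<Rightarrow> int \<times> int \<Rightarrow> int \<times> int" where
  "addZ2 a b = (fst a + fst b, snd a + snd b)"

definition eta :: "int \<times> int" where "eta = (1, 0)"
definition xi :: "int \<times> int" where "xi = (0, 1)"

definition cyc :: "int \<times> int \<Rightarrow> (int \<times> int) set" where
  "cyc g = {(n * fst g, n * snd g) | n. True}"

definition pi_xi :: "int \<times> int \<Rightarrow> int \<times> int" where "pi_xi h = (0, snd h)"
definition pi_eta :: "int \<times> int \<Rightarrow> int \<times> int" where "pi_eta h = (fst h, 0)"

end

theory Submission
  imports Defs
begin


fun val :: "int \<Rightarrow> int \<Rightarrow> int list \<Rightarrow> int \<times> int" where
  "val p q [] = (0,0)"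
| "val p q (a#w) = (snd (val p q w) - p * fst (val p q w), a + q * fst (val p q w))"

lemma sim_val: "sim p q (Poly w) [:snd (val p q w), fst (val p q w):]"
proof (induction w)
  case Nil
  then show ?case by (simp add: sim_def)
next
  case (Cons a w)
  define v1 where "v1 = fst (val p q w)"
  define v2 where "v2 = snd (val p q w)"
  from Cons obtain g where g: "Poly w - [:v2, v1:] = tpoly p q * g"
    unfolding sim_def v1_def v2_def dvd_def by blast
  hence g': "Poly w = [:v2, v1:] + tpoly p q * g" by (simp add: algebra_simps)
  have "Poly (a#w) - [:a + q*v1, v2 - p*v1:] = tpoly p q * ([:v1:] + pCons 0 g)"
    by (simp add: g' tpoly_def algebra_simps mult_pCons_right smult_add_right)
  then have "tpoly p q dvd (Poly (a#w) - [:a + q*v1, v2 - p*v1:])"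
    by (metis dvd_triv_left)
  then show ?case by (simp add: sim_def v1_def v2_def)
qed

lemma tpoly_nz: "tpoly p q \<noteq> 0" by (simp add: tpoly_def)

lemma tpoly_dvd_lin: assumes "tpoly p q dvd [:a, b:]" shows "a = 0 \<and> b = 0"
proof (rule ccontr)
  assume nz: "\<not> (a = 0 \<and> b = 0)"
  from assms obtain g where g: "[:a, b:] = tpoly p q * g" by (auto simp: dvd_def)
  with nz have "g \<noteq> 0" by auto
  moreover have "degree (tpoly p q) = 2" by (simp add: tpoly_def)
  ultimately have "degree (tpoly p q * g) = 2 + degree g" using tpoly_nz
    by (simp add: degree_mult_eq)
  moreover have "degree [:a, b:] \<le> 1" by simp
  ultimately show False using g by simp
qed

lemma sim_sym: "sim p q f g \<Longrightarrow> sim p q g f"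
  unfolding sim_def by (metis dvd_minus_iff minus_diff_eq)

lemma sim_trans: "sim p q f g \<Longrightarrow> sim p q g h \<Longrightarrow> sim p q f h"
  unfolding sim_def by (metis dvd_add diff_add_cancel add_diff_eq)

lemma sim_lin: "sim p q [:a, b:] [:c, d:] \<longleftrightarrow> a = c \<and> b = d"
proof
  assume "sim p q [:a, b:] [:c, d:]"
  hence "tpoly p q dvd [:a - c, b - d:]" by (simp add: sim_def)
  thus "a = c \<and> b = d" using tpoly_dvd_lin by fastforce
qed (simp add: sim_def)

lemma psi_val: "psi p q w = val p q w"
  unfolding psi_def
proof (rule the_equality)
  show "sim p q [:snd (val p q w), fst (val p q w):] (Poly w)" by (rule sim_sym[OF sim_val])
next
  fix h assume "sim p q [:snd h, fst h:] (Poly w)"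
  from sim_trans[OF this sim_val] show "h = val p q w" by (simp add: sim_lin prod_eq_iff)
qed

lemma str_equiv_val: "str_equiv p q u w \<longleftrightarrow> val p q u = val p q w"
proof -
  have "str_equiv p q u w \<longleftrightarrow> sim p q [:snd (val p q u), fst (val p q u):] [:snd (val p q w), fst (val p q w):]"
    unfolding str_equiv_def using sim_val sim_sym sim_trans by meson
  thus ?thesis by (auto simp add: sim_lin prod_eq_iff)
qed



lemma digit_nonneg: fixes q h :: int assumes "q \<noteq> 0" "h \<ge> 0"
  shows "\<exists>a k. h = a + q*k \<and> \<bar>a\<bar> < \<bar>q\<bar> \<and> \<bar>q\<bar>*\<bar>k\<bar> \<le> \<bar>h\<bar>"
proof -
  define m where "m = h div \<bar>q\<bar>"
  define a where "a = h mod \<bar>q\<bar>"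
  have hm: "h = a + \<bar>q\<bar> * m" unfolding a_def m_def by simp
  have a0: "0 \<le> a" "a < \<bar>q\<bar>" using assms unfolding a_def by auto
  have m0: "0 \<le> m" using assms unfolding m_def by (simp add: div_int_pos_iff)
  have "q * (sgn q * m) = \<bar>q\<bar> * m" by (simp add: abs_sgn mult.assoc[symmetric] mult.commute[of q])
  moreover have "\<bar>sgn q * m\<bar> = m" using assms m0 by (simp add: abs_mult)
  ultimately show ?thesis using hm a0 m0 assms
    by (intro exI[of _ a] exI[of _ "sgn q * m"]) auto
qed

lemma digit: fixes q h :: int assumes "q \<noteq> 0"
  shows "\<exists>a k. h = a + q*k \<and> \<bar>a\<bar> < \<bar>q\<bar> \<and> \<bar>q\<bar>*\<bar>k\<bar> \<le> \<bar>h\<bar>"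
proof (cases "h \<ge> 0")
  case True thus ?thesis using digit_nonneg[OF assms] by blast
next
  case False
  then obtain a k where "-h = a + q*k" "\<bar>a\<bar> < \<bar>q\<bar>" "\<bar>q\<bar>*\<bar>k\<bar> \<le> \<bar>-h\<bar>"
    using digit_nonneg[OF assms, of "-h"] by auto
  thus ?thesis by (intro exI[of _ "-a"] exI[of _ "-k"]) auto
qed

lemma val_surj:
  assumes pq: "1 + \<bar>p\<bar> < \<bar>q\<bar>"
  shows "\<exists>w \<in> lists (Sigma_q q). val p q w = h"
proof (induction h rule: measure_induct_rule[where f = "\<lambda>(h1,h2). nat (2*(\<bar>h1\<bar>+\<bar>h2\<bar>) + (if h2 = 0 then 1 else 0))"])
  case (less h)
  obtain h1 h2 where h: "h = (h1,h2)" by force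
  show ?case
  proof (cases "h1 = 0 \<and> h2 = 0")
    case True thus ?thesis using h by (intro bexI[of _ "[]"]) auto
  next
    case nz: False
    have q0: "q \<noteq> 0" using pq by auto
    obtain a k where ak: "h2 = a + q*k" "\<bar>a\<bar> < \<bar>q\<bar>" "\<bar>q\<bar>*\<bar>k\<bar> \<le> \<bar>h2\<bar>"
      using digit[OF q0] by blast
    have meas: "nat (2*(\<bar>k\<bar>+\<bar>h1 + p*k\<bar>) + (if h1 + p*k = 0 then 1 else 0))
        < nat (2*(\<bar>h1\<bar>+\<bar>h2\<bar>) + (if h2 = 0 then 1 else 0))"
    proof (cases "h2 = 0")
      case True
      hence "k = 0" using ak(3) q0 by (simp add: mult_le_0_iff)
      thus ?thesis using True nz by auto
    next
      case h2: False
      show ?thesis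
      proof (cases "k = 0")
        case True thus ?thesis using h2 by auto
      next
        case k: False
        have "(1 + \<bar>p\<bar>) * \<bar>k\<bar> \<le> (\<bar>q\<bar> - 1) * \<bar>k\<bar>"
          using pq by (intro mult_right_mono) auto
        hence "(1 + \<bar>p\<bar>) * \<bar>k\<bar> \<le> \<bar>h2\<bar> - \<bar>k\<bar>" using ak(3) by (simp add: algebra_simps)
        moreover have "\<bar>h1 + p*k\<bar> \<le> \<bar>h1\<bar> + \<bar>p\<bar>*\<bar>k\<bar>"
          by (metis abs_mult abs_triangle_ineq)
        moreover have "\<bar>p\<bar>*\<bar>k\<bar> \<ge> 0" by simp
        moreover have "\<bar>k\<bar> \<ge> 1" using k by simp
        ultimately have "2*(\<bar>k\<bar>+\<bar>h1 + p*k\<bar>) + 1 < 2*(\<bar>h1\<bar>+\<bar>h2\<bar>)"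
          by (simp add: algebra_simps)
        thus ?thesis using h2 by auto
      qed
    qed
    then obtain w where w: "w \<in> lists (Sigma_q q)" "val p q w = (k, h1 + p*k)"
      using less[of "(k, h1 + p*k)"] h by auto
    have "a \<in> Sigma_q q" using ak(2) unfolding Sigma_q_def by auto
    moreover have "val p q (a#w) = h" using w ak h by (simp add: algebra_simps)
    ultimately show ?thesis using w by (intro bexI[of _ "a#w"]) auto
  qed
qed



abbreviation "ltr \<equiv> {(a::int, b). a < b}"

lemma Dom_inj:
  assumes "u \<in> Dom p q" "w \<in> Dom p q" "val p q u = val p q w" shows "u = w"
proof (rule ccontr)
  assume "u \<noteq> w"
  have "total ltr" by (auto simp: total_on_def)
  hence "(u,w) \<in> lenlex ltr \<or> (w,u) \<in> lenlex ltr" using \<open>u \<noteq> w\<close> total_lenlex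
    unfolding total_on_def by blast
  moreover have "str_equiv p q u w" "str_equiv p q w u" using assms(3) str_equiv_val by auto
  moreover have "u \<in> lists (Sigma_q q)" "w \<in> lists (Sigma_q q)"
    "\<not> (\<exists>v \<in> lists (Sigma_q q). llex_less v w \<and> str_equiv p q v w)"
    "\<not> (\<exists>v \<in> lists (Sigma_q q). llex_less v u \<and> str_equiv p q v u)"
    using assms(1,2) unfolding Dom_def by auto
  ultimately show False unfolding llex_less_def by blast
qed

lemma lenlex_restrict:
  assumes "(u,w) \<in> lenlex ltr" "u \<in> lists A" "w \<in> lists A"
  shows "(u,w) \<in> lenlex {(a,b). a < b \<and> a \<in> A \<and> b \<in> A}"
proof -
  from assms(1) have "length u < length w \<or> length u = length w \<and> (u,w) \<in> lex ltr"
    unfolding lenlex_conv by auto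
  thus ?thesis
  proof
    assume "length u < length w" thus ?thesis unfolding lenlex_conv by auto
  next
    assume h: "length u = length w \<and> (u,w) \<in> lex ltr"
    then obtain xys x y xs' ys' where e: "u = xys @ x # xs'" "w = xys @ y # ys'" "x < y"
      unfolding lex_conv by auto
    have "x \<in> A" "y \<in> A" using e assms(2,3) by auto
    thus ?thesis using h e unfolding lenlex_conv lex_conv by blast
  qed
qed

lemma Dom_ex:
  assumes pq: "1 + \<bar>p\<bar> < \<bar>q\<bar>"
  shows "\<exists>w \<in> Dom p q. val p q w = h"
proof -
  let ?r = "{(a,b). a < b \<and> a \<in> Sigma_q q \<and> b \<in> Sigma_q q}"
  have "?r \<subseteq> measure (\<lambda>a. nat (a + \<bar>q\<bar>))" unfolding Sigma_q_def by auto
  hence wfr: "wf ?r" using wf_subset by blast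
  let ?S = "{w \<in> lists (Sigma_q q). val p q w = h}"
  obtain w0 where "w0 \<in> ?S" using val_surj[OF pq] by blast
  then obtain m where m: "m \<in> ?S" "\<And>y. (y,m) \<in> lenlex ?r \<Longrightarrow> y \<notin> ?S"
    using wfE_min[OF wf_lenlex[OF wfr], of w0 ?S] by blast
  have "\<not> (\<exists>u \<in> lists (Sigma_q q). llex_less u m \<and> str_equiv p q u m)"
  proof
    assume "\<exists>u \<in> lists (Sigma_q q). llex_less u m \<and> str_equiv p q u m"
    then obtain u where u: "u \<in> lists (Sigma_q q)" "(u,m) \<in> lenlex ltr" "str_equiv p q u m"
      unfolding llex_less_def by blast
    hence "(u,m) \<in> lenlex ?r" using lenlex_restrict m(1) by blast
    thus False using m u str_equiv_val by auto
  qed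
  hence "m \<in> Dom p q" using m(1) unfolding Dom_def by blast
  thus ?thesis using m by auto
qed

lemma psi_bij:
  assumes pq: "1 + \<bar>p\<bar> < \<bar>q\<bar>"
  shows "bij_betw (psi p q) (Dom p q) UNIV"
  unfolding bij_betw_def psi_val
proof (intro conjI)
  show "inj_on (val p q) (Dom p q)" unfolding inj_on_def using Dom_inj by blast
  show "val p q ` Dom p q = UNIV"
  proof (rule set_eqI, rule iffI)
    fix h assume "h \<in> (UNIV :: (int \<times> int) set)"
    then obtain w where "w \<in> Dom p q" "val p q w = h" using Dom_ex[OF pq] by blast
    thus "h \<in> val p q ` Dom p q" by blast
  qed simp
qed



lemma dfa_fa:
  fixes Q :: "'s set" and \<delta> :: "'s \<Rightarrow> 'a \<Rightarrow> 's"
  assumes A: "finite A" and L: "L \<subseteq> lists A" and Q: "finite Q" and s: "s \<in> Q"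
    and cl: "\<forall>st\<in>Q. \<forall>a\<in>A. \<delta> st a \<in> Q"
    and acc: "\<forall>w\<in>lists A. w \<in> L \<longleftrightarrow> fold (\<lambda>a st. \<delta> st a) w s \<in> F"
  shows "fa_recognizable A L"
proof -
  obtain h where h: "bij_betw h Q {0..<card Q}" using ex_bij_betw_finite_nat[OF Q] by blast
  have hinj: "inj_on h Q" using h by (simp add: bij_betw_def)
  have himg: "h ` Q = {0..<card Q}" using h by (simp add: bij_betw_def)
  define g where "g = inv_into Q h"
  have gh: "\<And>st. st \<in> Q \<Longrightarrow> g (h st) = st" unfolding g_def using hinj by simp
  define \<delta>' where "\<delta>' = (\<lambda>n a. h (\<delta> (g n) a))"
  have key: "fold (\<lambda>a st. \<delta>' st a) w (h st) = h (fold (\<lambda>a st. \<delta> st a) w st) \<and> fold (\<lambda>a st. \<delta> st a) w st \<in> Q"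
    if "w \<in> lists A" "st \<in> Q" for w st
    using that
  proof (induction w arbitrary: st)
    case Nil thus ?case by simp
  next
    case (Cons a w)
    have "\<delta>' (h st) a = h (\<delta> st a)" unfolding \<delta>'_def using gh Cons.prems by simp
    moreover have "\<delta> st a \<in> Q" using cl Cons by auto
    ultimately show ?case using Cons.IH[of "\<delta> st a"] Cons.prems by simp
  qed
  have g1: "h s \<in> {0..<card Q}" using s himg by blast
  have g2: "\<forall>st\<in>{0..<card Q}. \<forall>a\<in>A. \<delta>' st a \<in> {0..<card Q}"
    unfolding \<delta>'_def using cl himg g_def by (metis bij_betw_inv_into_left h image_eqI inv_into_into)
  have g3: "h ` (F \<inter> Q) \<subseteq> {0..<card Q}" using himg by blast
  have g4: "\<forall>w\<in>lists A. (w \<in> L) = (fold (\<lambda>a st. \<delta>' st a) w (h s) \<in> h ` (F \<inter> Q))"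
  proof
    fix w assume w: "w \<in> lists A"
    from key[OF w s] have k: "fold (\<lambda>a st. \<delta>' st a) w (h s) = h (fold (\<lambda>a st. \<delta> st a) w s)"
      "fold (\<lambda>a st. \<delta> st a) w s \<in> Q" by auto
    have "h (fold (\<lambda>a st. \<delta> st a) w s) \<in> h ` (F \<inter> Q) \<longleftrightarrow> fold (\<lambda>a st. \<delta> st a) w s \<in> F"
      using k(2) hinj by (auto simp: inj_on_image_mem_iff)
    thus "(w \<in> L) = (fold (\<lambda>a st. \<delta>' st a) w (h s) \<in> h ` (F \<inter> Q))"
      using k(1) acc w by simp
  qed
  have "finite {0..<card Q}" by simp
  thus ?thesis unfolding fa_recognizable_def using A L g1 g2 g3 g4 by blast
qed

definition nsteps :: "('s \<Rightarrow> 'a \<Rightarrow> 's set) \<Rightarrow> 'a list \<Rightarrow> 's set \<Rightarrow> 's set" where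
  "nsteps \<delta> w S = fold (\<lambda>a S. \<Union>s\<in>S. \<delta> s a) w S"

lemma nsteps_Nil[simp]: "nsteps \<delta> [] S = S" by (simp add: nsteps_def)
lemma nsteps_Cons: "nsteps \<delta> (a#w) S = nsteps \<delta> w (\<Union>s\<in>S. \<delta> s a)" by (simp add: nsteps_def)

lemma nsteps_UN: "nsteps \<delta> w S = (\<Union>s\<in>S. nsteps \<delta> w {s})"
proof (induction w arbitrary: S)
  case Nil thus ?case by simp
next
  case (Cons a w)
  show ?case unfolding nsteps_Cons Cons.IH[of "\<Union>s\<in>S. \<delta> s a"] Cons.IH[of "\<Union>s\<in>{_}. \<delta> s a"]
    by auto
qed

definition nacc :: "('s \<Rightarrow> 'a \<Rightarrow> 's set) \<Rightarrow> 's set \<Rightarrow> 'a list \<Rightarrow> 's \<Rightarrow> bool" where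
  "nacc \<delta> F w s \<longleftrightarrow> nsteps \<delta> w {s} \<inter> F \<noteq> {}"

lemma nacc_Nil[simp]: "nacc \<delta> F [] s \<longleftrightarrow> s \<in> F" by (simp add: nacc_def)
lemma nacc_Cons: "nacc \<delta> F (a#w) s \<longleftrightarrow> (\<exists>s'\<in>\<delta> s a. nacc \<delta> F w s')"
  unfolding nacc_def nsteps_Cons by (subst nsteps_UN) auto

lemma nfa_fa:
  fixes Q :: "'s set" and \<delta> :: "'s \<Rightarrow> 'a \<Rightarrow> 's set"
  assumes A: "finite A" and Q: "finite Q" and s: "s \<in> Q"
    and cl: "\<forall>st\<in>Q. \<forall>a\<in>A. \<delta> st a \<subseteq> Q"
  shows "fa_recognizable A {w \<in> lists A. nacc \<delta> F w s}"
    and "fa_recognizable A {w \<in> lists A. \<not> nacc \<delta> F w s}"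
proof -
  have cl': "\<forall>S\<in>Pow Q. \<forall>a\<in>A. (\<Union>s\<in>S. \<delta> s a) \<in> Pow Q" using cl by blast
  have fd: "fold (\<lambda>a st. \<Union>s\<in>st. \<delta> s a) w {s} = nsteps \<delta> w {s}" for w
    by (simp add: nsteps_def)
  show "fa_recognizable A {w \<in> lists A. nacc \<delta> F w s}"
    by (rule dfa_fa[where Q = "Pow Q" and s = "{s}" and F = "{S. S \<inter> F \<noteq> {}}"])
       (use A Q s cl' in \<open>auto simp: fd nacc_def\<close>)
  show "fa_recognizable A {w \<in> lists A. \<not> nacc \<delta> F w s}"
    by (rule dfa_fa[where Q = "Pow Q" and s = "{s}" and F = "{S. S \<inter> F = {}}"])
       (use A Q s cl' in \<open>auto simp: fd nacc_def\<close>)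
qed

lemma fa_map:
  assumes "fa_recognizable B L" "finite A" "\<forall>a\<in>A. f a \<in> B"
  shows "fa_recognizable A {w \<in> lists A. map f w \<in> L}"
proof -
  from assms(1) obtain Q s \<delta> F where B: "finite B" "L \<subseteq> lists B" and
    D: "finite (Q::nat set)" "s \<in> Q" "\<forall>st\<in>Q. \<forall>a\<in>B. \<delta> st a \<in> Q" "F \<subseteq> Q"
    "\<forall>w\<in>lists B. w \<in> L \<longleftrightarrow> fold (\<lambda>a st. \<delta> st a) w s \<in> F"
    unfolding fa_recognizable_def by blast
  have fm: "fold (\<lambda>a st. \<delta> st (f a)) w st = fold (\<lambda>a st. \<delta> st a) (map f w) st" for w st
    by (induction w arbitrary: st) auto
  have ml: "w \<in> lists A \<Longrightarrow> map f w \<in> lists B" for w using assms(3) by auto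
  show ?thesis
    by (rule dfa_fa[where Q = Q and s = s and \<delta> = "\<lambda>st a. \<delta> st (f a)" and F = F])
       (use assms(2,3) D ml in \<open>auto simp: fm\<close>)
qed

lemma pump:
  assumes "fa_recognizable A L" "infinite L"
  shows "\<exists>x y z. y \<noteq> [] \<and> (\<forall>k. x @ concat (replicate k y) @ z \<in> L)"
proof -
  from assms(1) obtain Q s \<delta> F where B: "finite A" "L \<subseteq> lists A" and
    D: "finite (Q::nat set)" "s \<in> Q" "\<forall>st\<in>Q. \<forall>a\<in>A. \<delta> st a \<in> Q" "F \<subseteq> Q"
    "\<forall>w\<in>lists A. w \<in> L \<longleftrightarrow> fold (\<lambda>a st. \<delta> st a) w s \<in> F"
    unfolding fa_recognizable_def by blast
  let ?f = "\<lambda>w. fold (\<lambda>a st. \<delta> st a) w s"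
  have inQ: "\<And>w st. w \<in> lists A \<Longrightarrow> st \<in> Q \<Longrightarrow> fold (\<lambda>a st. \<delta> st a) w st \<in> Q"
  proof -
    fix w st assume "w \<in> lists A" "st \<in> Q" thus "fold (\<lambda>a st. \<delta> st a) w st \<in> Q"
      using D(3) by (induction w arbitrary: st) auto
  qed
  obtain w where w: "w \<in> L" "length w > card Q"
  proof (rule ccontr)
    assume "\<not> thesis"
    hence "L \<subseteq> {xs. set xs \<subseteq> A \<and> length xs \<le> card Q}" using B(2) that by fastforce
    thus False using finite_lists_length_le[OF B(1)] assms(2) finite_subset by blast
  qed
  have wA: "w \<in> lists A" using w B by auto
  let ?st = "\<lambda>i. ?f (take i w)"
  have "?st ` {0..card Q} \<subseteq> Q" using inQ D(2) wA by (auto intro: in_listsI dest: in_set_takeD)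
  hence "\<not> inj_on ?st {0..card Q}"
    using D(1) card_mono[OF D(1)] card_image by (metis card_atLeastAtMost diff_zero not_less_eq_eq order_refl)
  then obtain i j where ij: "i < j" "j \<le> card Q" "?st i = ?st j"
    unfolding inj_on_def by (metis atLeastAtMost_iff linorder_neqE_nat)
  define x where "x = take i w"
  define y where "y = take (j - i) (drop i w)"
  define z where "z = drop j w"
  have tj: "take j w = x @ y" unfolding x_def y_def using ij
    by (metis le_add_diff_inverse less_imp_le_nat take_add)
  have wxyz: "w = x @ y @ z" using tj unfolding z_def by (metis append.assoc append_take_drop_id)
  have ny: "y \<noteq> []" unfolding y_def using ij w(2) by simp
  have fxy: "fold (\<lambda>a st. \<delta> st a) y (?f x) = ?f x" using ij(3) tj x_def by simp
  have rep: "fold (\<lambda>a st. \<delta> st a) (concat (replicate k y)) (?f x) = ?f x" for k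
    by (induction k) (simp_all add: fxy)
  have "x @ concat (replicate k y) @ z \<in> L" for k
  proof -
    have l: "x @ concat (replicate k y) @ z \<in> lists A" using wA wxyz by auto
    have "?f (x @ concat (replicate k y) @ z) = ?f w"
      using rep[of k] rep[of 1] wxyz by simp
    thus ?thesis using D(5) l wA w(1) by auto
  qed
  thus ?thesis using ny by blast
qed



definition cstep :: "int \<Rightarrow> int \<Rightarrow> int \<times> int \<Rightarrow> int \<Rightarrow> (int \<times> int) option" where
  "cstep p q c d = (if q dvd (snd c + d) then Some ((snd c + d) div q, fst c + p * ((snd c + d) div q)) else None)"

lemma cstep_lemma:
  assumes "q \<noteq> 0"
  shows "(fst c + (V2 - p*V1) = 0 \<and> snd c + d + q*V1 = 0) \<longleftrightarrow>
         (\<exists>c'. cstep p q c d = Some c' \<and> fst c' + V1 = 0 \<and> snd c' + V2 = 0)"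
proof
  assume h: "fst c + (V2 - p*V1) = 0 \<and> snd c + d + q*V1 = 0"
  hence e: "snd c + d = q * (-V1)" by (simp add: algebra_simps)
  hence "q dvd (snd c + d)" by simp
  moreover have "(snd c + d) div q = -V1" unfolding e using assms by (metis nonzero_mult_div_cancel_left)
  ultimately show "\<exists>c'. cstep p q c d = Some c' \<and> fst c' + V1 = 0 \<and> snd c' + V2 = 0"
    using h by (simp add: cstep_def algebra_simps)
next
  assume "\<exists>c'. cstep p q c d = Some c' \<and> fst c' + V1 = 0 \<and> snd c' + V2 = 0"
  then obtain c' where c': "cstep p q c d = Some c'" "fst c' + V1 = 0" "snd c' + V2 = 0" by blast
  hence dv: "q dvd (snd c + d)" by (simp add: cstep_def split: if_splits)
  then obtain k where k: "snd c + d = q * k" by blast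
  hence kd: "(snd c + d) div q = k" using assms by simp
  have "c' = (k, fst c + p*k)" using c'(1) dv kd by (simp add: cstep_def)
  hence v: "V1 = -k" "V2 = -(fst c + p*k)" using c' by auto
  show "fst c + (V2 - p*V1) = 0 \<and> snd c + d + q*V1 = 0" using k
    by (simp add: v algebra_simps)
qed

definition box :: "int \<Rightarrow> (int \<times> int) set" where
  "box B = {c. 3*\<bar>fst c\<bar> + 2*\<bar>snd c\<bar> \<le> B}"

lemma finite_box: "finite (box B)"
proof -
  have "box B \<subseteq> {-B..B} \<times> {-B..B}" unfolding box_def by auto
  thus ?thesis by (rule finite_subset) simp
qed

lemma box_inv:
  assumes pq: "1 + \<bar>p\<bar> < \<bar>q\<bar>" and d: "\<bar>d\<bar> \<le> E" and c: "c \<in> box (4*\<bar>q\<bar>*E)"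
    and st: "cstep p q c d = Some c'"
  shows "c' \<in> box (4*\<bar>q\<bar>*E)"
proof -
  have q0: "q \<noteq> 0" using pq by auto
  have dv: "q dvd (snd c + d)" using st by (simp add: cstep_def split: if_splits)
  then obtain k where k: "snd c + d = q * k" by blast
  hence kd: "(snd c + d) div q = k" using q0 by simp
  have c': "c' = (k, fst c + p*k)" using st dv kd by (simp add: cstep_def)
  define K where "K = \<bar>k\<bar>"
  define A where "A = \<bar>fst c\<bar>"
  define C where "C = \<bar>snd c\<bar>"
  define P where "P = \<bar>p\<bar>"
  define Q where "Q = \<bar>q\<bar>"
  define N' where "N' = 3*\<bar>fst c'\<bar> + 2*\<bar>snd c'\<bar>"
  have E0: "E \<ge> 0" using d by linarith
  have nn: "K \<ge> 0" "A \<ge> 0" "C \<ge> 0" "P \<ge> 0" "Q \<ge> 2" using pq unfolding K_def A_def C_def P_def Q_def by auto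
  have N: "3*A + 2*C \<le> 4*Q*E" using c unfolding box_def A_def C_def Q_def by simp
  have QK: "Q*K \<le> C + E"
  proof -
    have "Q*K = \<bar>snd c + d\<bar>" unfolding Q_def K_def using k by (simp add: abs_mult)
    also have "\<dots> \<le> C + E" unfolding C_def using d by linarith
    finally show ?thesis .
  qed
  have N'b: "N' \<le> 3*K + 2*A + 2*(P*K)"
  proof -
    have "\<bar>fst c + p*k\<bar> \<le> A + P*K" unfolding A_def P_def K_def by (metis abs_mult abs_triangle_ineq)
    thus ?thesis unfolding N'_def c' K_def by simp
  qed
  have h1: "(6+4*P)*(Q*K) \<le> (4*Q-2)*(C+E)"
    by (rule mult_mono) (use nn pq QK P_def Q_def in auto)
  have h2: "2*Q*N' \<le> (6+4*P)*(Q*K) + 4*Q*A"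
  proof -
    have "2*Q*N' \<le> 2*Q*(3*K + 2*A + 2*(P*K))" using N'b nn by (intro mult_left_mono) auto
    also have "\<dots> = (6+4*P)*(Q*K) + 4*Q*A" by (simp add: algebra_simps)
    finally show ?thesis .
  qed
  have h3: "4*Q*A \<le> (6*Q-3)*A" using nn by (intro mult_right_mono) auto
  have h4: "(2*Q-1)*(3*A+2*C) \<le> (2*Q-1)*(4*Q*E)" using N nn by (intro mult_left_mono) auto
  have h5: "(4*Q-2)*(C+E) + (6*Q-3)*A = (2*Q-1)*(3*A+2*C) + (4*Q-2)*E" by (simp add: algebra_simps)
  have h6: "(4*Q-2)*E \<le> 4*Q*E" using E0 by (simp add: algebra_simps)
  have h7: "(2*Q-1)*(4*Q*E) + 4*Q*E = 2*Q*(4*Q*E)" by (simp add: algebra_simps)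
  have "2*Q*N' \<le> 2*Q*(4*Q*E)" using h1 h2 h3 h4 h5 h6 h7 by linarith
  hence "N' \<le> 4*Q*E" using nn by (simp add: mult.commute mult.left_commute)
  thus ?thesis unfolding box_def N'_def Q_def by simp
qed



datatype md = Eq | Lt | Gt | En

lemma UNIV_md: "(UNIV :: md set) = {Eq, Lt, Gt, En}" using md.exhaust by auto

fun newmode :: "md \<Rightarrow> int \<Rightarrow> int \<Rightarrow> md" where
  "newmode Eq b a = (if b < a then Lt else if a < b then Gt else Eq)"
| "newmode m b a = m"

fun cond :: "md \<Rightarrow> int list \<Rightarrow> int list \<Rightarrow> bool" where
  "cond Eq u w = (length u < length w \<or> (u, w) \<in> lex ltr)"
| "cond Lt u w = True"
| "cond Gt u w = (length u < length w)"
| "cond En u w = (u = [])"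

lemma cond_Nil_Cons: "cond m [] (a#w)" by (cases m) auto

lemma cond_Nil_Nil: "cond m [] [] \<longleftrightarrow> m = Lt \<or> m = En" by (cases m) auto

lemma cond_Cons:
  assumes "length u \<le> length w"
  shows "cond m (b#u) (a#w) \<longleftrightarrow> m \<noteq> En \<and> cond (newmode m b a) u w"
proof (cases m)
  case Eq
  have "(u, w) \<in> lex ltr \<Longrightarrow> length u = length w" by (simp add: lex_conv)
  thus ?thesis using Eq assms by auto
qed auto

definition good :: "int \<Rightarrow> int \<Rightarrow> int \<times> int \<Rightarrow> int list \<Rightarrow> int list \<Rightarrow> bool" where
  "good p q c u w \<longleftrightarrow> fst c + fst (val p q u) - fst (val p q w) = 0 \<and> snd c + snd (val p q u) - snd (val p q w) = 0"

lemma good_Cons: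
  assumes "q \<noteq> 0"
  shows "good p q c (b#u) (a#w) \<longleftrightarrow> (\<exists>c'. cstep p q c (b - a) = Some c' \<and> good p q c' u w)"
proof -
  define V1 where "V1 = fst (val p q u) - fst (val p q w)"
  define V2 where "V2 = snd (val p q u) - snd (val p q w)"
  have "good p q c (b#u) (a#w) \<longleftrightarrow> (fst c + (V2 - p*V1) = 0 \<and> snd c + (b - a) + q*V1 = 0)"
    unfolding good_def V1_def V2_def by (simp add: algebra_simps)
  also have "\<dots> \<longleftrightarrow> (\<exists>c'. cstep p q c (b - a) = Some c' \<and> fst c' + V1 = 0 \<and> snd c' + V2 = 0)"
    by (rule cstep_lemma[OF assms])
  also have "\<dots> \<longleftrightarrow> (\<exists>c'. cstep p q c (b - a) = Some c' \<and> good p q c' u w)"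
    unfolding good_def V1_def V2_def by (simp add: algebra_simps)
  finally show ?thesis .
qed

lemma good_Nil:
  assumes "q \<noteq> 0"
  shows "good p q c [] (a#w) \<longleftrightarrow> (\<exists>c'. cstep p q c (- a) = Some c' \<and> good p q c' [] w)"
proof -
  define V1 where "V1 = - fst (val p q w)"
  define V2 where "V2 = - snd (val p q w)"
  have "good p q c [] (a#w) \<longleftrightarrow> (fst c + (V2 - p*V1) = 0 \<and> snd c + (- a) + q*V1 = 0)"
    unfolding good_def V1_def V2_def by (simp add: algebra_simps)
  also have "\<dots> \<longleftrightarrow> (\<exists>c'. cstep p q c (- a) = Some c' \<and> fst c' + V1 = 0 \<and> snd c' + V2 = 0)"
    by (rule cstep_lemma[OF assms])
  also have "\<dots> \<longleftrightarrow> (\<exists>c'. cstep p q c (- a) = Some c' \<and> good p q c' [] w)"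
    unfolding good_def V1_def V2_def by (simp add: algebra_simps)
  finally show ?thesis .
qed

definition d1 :: "int \<Rightarrow> int \<Rightarrow> (int \<times> int) \<times> md \<Rightarrow> int \<Rightarrow> ((int \<times> int) \<times> md) set" where
  "d1 p q s a = {(c', newmode (snd s) b a) | b c'. b \<in> Sigma_q q \<and> snd s \<noteq> En \<and> cstep p q (fst s) (b - a) = Some c'}
              \<union> {(c', En) | c'. cstep p q (fst s) (- a) = Some c'}"

definition F1 :: "((int \<times> int) \<times> md) set" where "F1 = {((0,0), Lt), ((0,0), En)}"

lemma d1_correct:
  assumes q0: "q \<noteq> 0"
  shows "nacc (d1 p q) F1 w (c, m) \<longleftrightarrow>
    (\<exists>u \<in> lists (Sigma_q q). length u \<le> length w \<and> cond m u w \<and> good p q c u w)"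
proof (induction w arbitrary: c m)
  case Nil
  show ?case by (auto simp: F1_def good_def cond_Nil_Nil prod_eq_iff)
next
  case (Cons a w)
  show ?case
  proof
    assume "nacc (d1 p q) F1 (a#w) (c, m)"
    then obtain s' where s': "s' \<in> d1 p q (c,m) a" "nacc (d1 p q) F1 w s'"
      unfolding nacc_Cons by blast
    from s'(1) consider
      (A) b c' where "s' = (c', newmode m b a)" "b \<in> Sigma_q q" "m \<noteq> En" "cstep p q c (b - a) = Some c'"
    | (B) c' where "s' = (c', En)" "cstep p q c (- a) = Some c'"
      unfolding d1_def by auto
    thus "\<exists>u \<in> lists (Sigma_q q). length u \<le> length (a#w) \<and> cond m u (a#w) \<and> good p q c u (a#w)"
    proof cases
      case A
      with s'(2) Cons.IH obtain u' where u': "u' \<in> lists (Sigma_q q)" "length u' \<le> length w"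
        "cond (newmode m b a) u' w" "good p q c' u' w" by blast
      have "cond m (b#u') (a#w)" using cond_Cons[OF u'(2)] A u' by simp
      moreover have "good p q c (b#u') (a#w)" using good_Cons[OF q0] A u' by blast
      ultimately show ?thesis using A u' by (intro bexI[of _ "b#u'"]) auto
    next
      case B
      with s'(2) Cons.IH obtain u' where u': "u' \<in> lists (Sigma_q q)" "length u' \<le> length w"
        "cond En u' w" "good p q c' u' w" by blast
      hence "u' = []" by simp
      hence "good p q c [] (a#w)" using good_Nil[OF q0] B u' by blast
      thus ?thesis using cond_Nil_Cons by (intro bexI[of _ "[]"]) auto
    qed
  next
    assume "\<exists>u \<in> lists (Sigma_q q). length u \<le> length (a#w) \<and> cond m u (a#w) \<and> good p q c u (a#w)"
    then obtain u where u: "u \<in> lists (Sigma_q q)" "length u \<le> length (a#w)" "cond m u (a#w)" "good p q c u (a#w)"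
      by blast
    show "nacc (d1 p q) F1 (a#w) (c, m)"
    proof (cases u)
      case Nil
      then obtain c' where c': "cstep p q c (- a) = Some c'" "good p q c' [] w"
        using good_Nil[OF q0] u by blast
      hence "nacc (d1 p q) F1 w (c', En)" using Cons.IH by auto
      moreover have "(c', En) \<in> d1 p q (c,m) a" using c' unfolding d1_def by auto
      ultimately show ?thesis unfolding nacc_Cons by blast
    next
      case (Cons b u')
      have l: "length u' \<le> length w" using u Cons by simp
      have cm: "m \<noteq> En" "cond (newmode m b a) u' w" using u(3) cond_Cons[OF l] Cons by auto
      obtain c' where c': "cstep p q c (b - a) = Some c'" "good p q c' u' w"
        using good_Cons[OF q0] u(4) Cons by blast
      have "nacc (d1 p q) F1 w (c', newmode m b a)" using Cons.IH c' cm l u(1) Cons by auto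
      moreover have "(c', newmode m b a) \<in> d1 p q (c,m) a" unfolding d1_def
        using c' cm u(1) Cons by (intro UnI1 CollectI exI[of _ b] exI[of _ c']) auto
      ultimately show ?thesis unfolding nacc_Cons by blast
    qed
  qed
qed

lemma Dom_nfa:
  assumes pq: "1 + \<bar>p\<bar> < \<bar>q\<bar>"
  shows "Dom p q = {w \<in> lists (Sigma_q q). \<not> nacc (d1 p q) F1 w ((0,0), Eq)}"
proof -
  have q0: "q \<noteq> 0" using pq by auto
  have "\<And>w. nacc (d1 p q) F1 w ((0,0), Eq) \<longleftrightarrow> (\<exists>u \<in> lists (Sigma_q q). llex_less u w \<and> str_equiv p q u w)"
  proof -
    fix w
    have e: "\<And>u. (u, w) \<in> lex ltr \<Longrightarrow> length u = length w" by (simp add: lex_conv)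
    have "\<And>u. good p q (0,0) u w \<longleftrightarrow> str_equiv p q u w"
      unfolding good_def str_equiv_val by (simp add: prod_eq_iff)
    thus "nacc (d1 p q) F1 w ((0,0), Eq) \<longleftrightarrow> (\<exists>u \<in> lists (Sigma_q q). llex_less u w \<and> str_equiv p q u w)"
      unfolding d1_correct[OF q0] llex_less_def lenlex_conv using e
      by (auto intro: less_imp_le) (blast dest: e intro: eq_imp_le)
  qed
  thus ?thesis unfolding Dom_def by blast
qed

lemma Dom_regular:
  assumes pq: "1 + \<bar>p\<bar> < \<bar>q\<bar>"
  shows "fa_recognizable (Sigma_q q) (Dom p q)"
proof -
  define E where "E = 3 * \<bar>q\<bar>"
  define Q where "Q = box (4*\<bar>q\<bar>*E) \<times> (UNIV :: md set)"
  have fQ: "finite Q" unfolding Q_def by (simp add: finite_box UNIV_md)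
  have s0: "((0,0), Eq) \<in> Q" unfolding Q_def box_def E_def by simp
  have cl: "\<forall>st\<in>Q. \<forall>a\<in>Sigma_q q. d1 p q st a \<subseteq> Q"
  proof (intro ballI subsetI)
    fix st a s' assume st: "st \<in> Q" and a: "a \<in> Sigma_q q" and s': "s' \<in> d1 p q st a"
    have cb: "fst st \<in> box (4*\<bar>q\<bar>*E)" using st unfolding Q_def by auto
    from s' consider
      (A) b c' where "s' = (c', newmode (snd st) b a)" "b \<in> Sigma_q q" "cstep p q (fst st) (b - a) = Some c'"
    | (B) c' where "s' = (c', En)" "cstep p q (fst st) (- a) = Some c'"
      unfolding d1_def by auto
    thus "s' \<in> Q"
    proof cases
      case A
      have "\<bar>b - a\<bar> \<le> E" using A(2) a unfolding Sigma_q_def E_def by auto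
      thus ?thesis using box_inv[OF pq _ cb A(3)] A unfolding Q_def by auto
    next
      case B
      have "\<bar>- a\<bar> \<le> E" using a unfolding Sigma_q_def E_def by auto
      thus ?thesis using box_inv[OF pq _ cb B(2)] B unfolding Q_def by auto
    qed
  qed
  have fin: "finite (Sigma_q q)" unfolding Sigma_q_def by simp
  show ?thesis unfolding Dom_nfa[OF pq] using nfa_fa(2)[OF fin fQ s0 cl] .
qed



definition maxlen :: "'a list list \<Rightarrow> nat" where
  "maxlen ws = foldr (\<lambda>w m. max (length w) m) ws 0"

lemma maxlen_Nil[simp]: "maxlen [] = 0" by (simp add: maxlen_def)
lemma maxlen_Cons[simp]: "maxlen (w#ws) = max (length w) (maxlen ws)" by (simp add: maxlen_def)

lemma maxlen_ge: "w \<in> set ws \<Longrightarrow> length w \<le> maxlen ws"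
  by (induction ws) auto

lemma maxlen_0_iff: "maxlen ws = 0 \<longleftrightarrow> (\<forall>w\<in>set ws. w = [])"
  by (induction ws) auto

lemma maxlen_tl: "maxlen (map tl ws) = maxlen ws - 1"
  by (induction ws) auto

definition hdo :: "'a list \<Rightarrow> 'a option" where
  "hdo w = (if w = [] then None else Some (hd w))"

lemma conv_eq: "convolution ws = map (\<lambda>k. map (\<lambda>w. if k < length w then Some (w ! k) else None) ws) [0..<maxlen ws]"
  unfolding convolution_def maxlen_def ..

lemma conv_Nil_iff: "convolution ws = [] \<longleftrightarrow> (\<forall>w\<in>set ws. w = [])"
  unfolding conv_eq using maxlen_0_iff by auto

lemma conv_Cons:
  assumes "\<exists>w\<in>set ws. w \<noteq> []"
  shows "convolution ws = map hdo ws # convolution (map tl ws)"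
proof -
  have m: "maxlen ws = Suc (maxlen (map tl ws))"
    using assms maxlen_0_iff[of ws] maxlen_tl[of ws] by auto
  have "[0..<maxlen ws] = 0 # map Suc [0..<maxlen (map tl ws)]"
    unfolding m by (simp add: upt_conv_Cons map_Suc_upt)
  moreover have "map (\<lambda>w. if 0 < length w then Some (w ! 0) else None) ws = map hdo ws"
    by (auto simp: hdo_def hd_conv_nth)
  moreover have "map (\<lambda>w. if Suc k < length w then Some (w ! Suc k) else None) ws =
      map (\<lambda>w. if k < length w then Some (w ! k) else None) (map tl ws)" for k
    by (auto simp: nth_tl)
  ultimately show ?thesis unfolding conv_eq by simp
qed

lemma conv_alph:
  assumes "\<forall>w\<in>set ws. w \<in> lists A"
  shows "convolution ws \<in> lists (conv_alphabet A (length ws))"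
proof -
  have "set (map (\<lambda>w. if k < length w then Some (w ! k) else None) ws) \<subseteq> insert None (Some ` A)" for k
  proof
    fix x assume "x \<in> set (map (\<lambda>w. if k < length w then Some (w ! k) else None) ws)"
    then obtain w where w: "w \<in> set ws" "x = (if k < length w then Some (w ! k) else None)" by auto
    show "x \<in> insert None (Some ` A)"
    proof (cases "k < length w")
      case True
      hence "w ! k \<in> A" using assms w(1) nth_mem by (metis in_listsD)
      thus ?thesis using w True by auto
    qed (use w in auto)
  qed
  note H = this
  show ?thesis unfolding conv_eq conv_alphabet_def
  proof (intro in_listsI ballI)
    fix c assume "c \<in> set (map (\<lambda>k. map (\<lambda>w. if k < length w then Some (w ! k) else None) ws) [0..<maxlen ws])"
    then obtain k where c: "c = map (\<lambda>w. if k < length w then Some (w ! k) else None) ws" by auto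
    show "c \<in> {c. length c = length ws \<and> set c \<subseteq> insert None (Some ` A)}"
      using H[of k] unfolding c by simp
  qed
qed

lemma finite_conv_alph: "finite A \<Longrightarrow> finite (conv_alphabet A m)"
proof -
  assume "finite A"
  hence "finite {c. set c \<subseteq> insert None (Some ` A) \<and> length c = m}"
    by (intro finite_lists_length_eq) auto
  thus ?thesis unfolding conv_alphabet_def by (rule finite_subset[rotated]) auto
qed



fun tstep :: "(nat \<Rightarrow> int \<Rightarrow> nat) \<Rightarrow> nat \<times> bool \<Rightarrow> int option \<Rightarrow> (nat \<times> bool) option" where
  "tstep \<delta> (s, e) (Some a) = (if e then None else Some (\<delta> s a, False))"
| "tstep \<delta> (s, e) None = Some (s, True)"

definition tok :: "int set \<Rightarrow> (nat \<Rightarrow> int \<Rightarrow> nat) \<Rightarrow> nat set \<Rightarrow> nat \<times> bool \<Rightarrow> int list \<Rightarrow> bool" where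
  "tok S \<delta> FD t u \<longleftrightarrow> u \<in> lists S \<and> (snd t \<longrightarrow> u = []) \<and> fold (\<lambda>a st. \<delta> st a) u (fst t) \<in> FD"

fun oz :: "int option \<Rightarrow> int" where "oz None = 0" | "oz (Some a) = a"

fun cons_opt :: "int option \<Rightarrow> int list \<Rightarrow> int list" where
  "cons_opt None u = u" | "cons_opt (Some a) u = a # u"

lemma T1:
  assumes "tok S \<delta> FD t u"
  shows "\<exists>t'. tstep \<delta> t (hdo u) = Some t' \<and> tok S \<delta> FD t' (tl u)"
proof (cases u)
  case Nil
  obtain s e where t: "t = (s,e)" by force
  show ?thesis using assms Nil t by (auto simp: hdo_def tok_def)
next
  case (Cons a u')
  obtain s e where t: "t = (s,e)" by force
  show ?thesis using assms Cons t by (auto simp: hdo_def tok_def)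
qed

lemma T2:
  assumes "tstep \<delta> t oo = Some t'" "tok S \<delta> FD t' u'" "oo \<in> insert None (Some ` S)"
  shows "tok S \<delta> FD t (cons_opt oo u') \<and> hdo (cons_opt oo u') = oo \<and> tl (cons_opt oo u') = u'"
proof -
  obtain s e where t: "t = (s,e)" by force
  show ?thesis
  proof (cases oo)
    case None
    thus ?thesis using assms t by (auto simp: hdo_def tok_def)
  next
    case (Some a)
    thus ?thesis using assms t by (auto simp: hdo_def tok_def split: if_splits)
  qed
qed

lemma val_hd_tl: "val p q u = (snd (val p q (tl u)) - p * fst (val p q (tl u)), oz (hdo u) + q * fst (val p q (tl u)))"
  by (cases u) (auto simp: hdo_def)

definition good3 :: "int \<Rightarrow> int \<Rightarrow> int \<times> int \<Rightarrow> int list \<Rightarrow> int list \<Rightarrow> int list \<Rightarrow> bool" where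
  "good3 p q c u v w \<longleftrightarrow> fst c + fst (val p q u) + fst (val p q v) - fst (val p q w) = 0
      \<and> snd c + snd (val p q u) + snd (val p q v) - snd (val p q w) = 0"

lemma good3_step:
  assumes "q \<noteq> 0"
  shows "good3 p q c u v w \<longleftrightarrow> (\<exists>c'. cstep p q c (oz (hdo u) + oz (hdo v) - oz (hdo w)) = Some c'
            \<and> good3 p q c' (tl u) (tl v) (tl w))"
proof -
  define V1 where "V1 = fst (val p q (tl u)) + fst (val p q (tl v)) - fst (val p q (tl w))"
  define V2 where "V2 = snd (val p q (tl u)) + snd (val p q (tl v)) - snd (val p q (tl w))"
  define d where "d = oz (hdo u) + oz (hdo v) - oz (hdo w)"
  have "good3 p q c u v w \<longleftrightarrow> (fst c + (V2 - p*V1) = 0 \<and> snd c + d + q*V1 = 0)"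
    unfolding good3_def V1_def V2_def d_def
    by (subst (1 2 3 4 5 6) val_hd_tl) (simp add: algebra_simps)
  also have "\<dots> \<longleftrightarrow> (\<exists>c'. cstep p q c d = Some c' \<and> fst c' + V1 = 0 \<and> snd c' + V2 = 0)"
    by (rule cstep_lemma[OF assms])
  also have "\<dots> \<longleftrightarrow> (\<exists>c'. cstep p q c d = Some c' \<and> good3 p q c' (tl u) (tl v) (tl w))"
    unfolding good3_def V1_def V2_def by (simp add: algebra_simps)
  finally show ?thesis unfolding d_def .
qed

type_synonym st2 = "(int \<times> int) \<times> (nat \<times> bool) \<times> (nat \<times> bool) \<times> (nat \<times> bool)"

definition d2 :: "int \<Rightarrow> int \<Rightarrow> (nat \<Rightarrow> int \<Rightarrow> nat) \<Rightarrow> st2 \<Rightarrow> int option list \<Rightarrow> st2 set" where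
  "d2 p q \<delta> st col = {(c', t1', t2', t3') | c' t1' t2' t3'. length col = 3 \<and> (\<exists>oo\<in>set col. oo \<noteq> None)
     \<and> tstep \<delta> (fst (snd st)) (col!0) = Some t1' \<and> tstep \<delta> (fst (snd (snd st))) (col!1) = Some t2'
     \<and> tstep \<delta> (snd (snd (snd st))) (col!2) = Some t3'
     \<and> cstep p q (fst st) (oz (col!0) + oz (col!1) - oz (col!2)) = Some c'}"

definition F2 :: "nat set \<Rightarrow> st2 set" where
  "F2 FD = {(c, t1, t2, t3). c = (0,0) \<and> fst t1 \<in> FD \<and> fst t2 \<in> FD \<and> fst t3 \<in> FD}"

lemma tok_Nil: "tok S \<delta> FD t [] \<longleftrightarrow> fst t \<in> FD" by (simp add: tok_def)

lemma d2_correct: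
  assumes q0: "q \<noteq> 0" and cw: "cw \<in> lists (conv_alphabet S 3)"
  shows "nacc (d2 p q \<delta>) (F2 FD) cw (c, t1, t2, t3) \<longleftrightarrow>
    (\<exists>u v w. cw = convolution [u, v, w] \<and> tok S \<delta> FD t1 u \<and> tok S \<delta> FD t2 v \<and> tok S \<delta> FD t3 w
       \<and> good3 p q c u v w)"
  using cw
proof (induction cw arbitrary: c t1 t2 t3)
  case Nil
  have e: "([] = convolution [u, v, w]) \<longleftrightarrow> u = [] \<and> v = [] \<and> w = []" for u v w :: "int list"
    using conv_Nil_iff[of "[u,v,w]"] by auto
  show ?case by (auto simp: F2_def tok_Nil good3_def prod_eq_iff e)
next
  case (Cons col cw)
  have col: "length col = 3" "set col \<subseteq> insert None (Some ` S)"
    using Cons.hyps(1) unfolding conv_alphabet_def by auto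
  then obtain o1 o2 o3 where col3: "col = [o1, o2, o3]"
    by (auto simp: length_Suc_conv numeral_3_eq_3)
  have os: "o1 \<in> insert None (Some ` S)" "o2 \<in> insert None (Some ` S)" "o3 \<in> insert None (Some ` S)"
    using col(2) col3 by auto
  show ?case
  proof
    assume "nacc (d2 p q \<delta>) (F2 FD) (col # cw) (c, t1, t2, t3)"
    then obtain s' where s': "s' \<in> d2 p q \<delta> (c, t1, t2, t3) col" "nacc (d2 p q \<delta>) (F2 FD) cw s'"
      unfolding nacc_Cons by blast
    then obtain c' t1' t2' t3' where s'e: "s' = (c', t1', t2', t3')"
      and nn: "\<exists>oo\<in>set col. oo \<noteq> None"
      and tr: "tstep \<delta> t1 o1 = Some t1'" "tstep \<delta> t2 o2 = Some t2'" "tstep \<delta> t3 o3 = Some t3'"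
      and cs: "cstep p q c (oz o1 + oz o2 - oz o3) = Some c'"
      unfolding d2_def col3 by auto
    from s'(2) s'e Cons.IH obtain u' v' w' where IH: "cw = convolution [u', v', w']"
      "tok S \<delta> FD t1' u'" "tok S \<delta> FD t2' v'" "tok S \<delta> FD t3' w'" "good3 p q c' u' v' w'" by blast
    define u where "u = cons_opt o1 u'"
    define v where "v = cons_opt o2 v'"
    define w where "w = cons_opt o3 w'"
    have U: "tok S \<delta> FD t1 u" "hdo u = o1" "tl u = u'" using T2[OF tr(1) IH(2) os(1)] u_def by auto
    have V: "tok S \<delta> FD t2 v" "hdo v = o2" "tl v = v'" using T2[OF tr(2) IH(3) os(2)] v_def by auto
    have W: "tok S \<delta> FD t3 w" "hdo w = o3" "tl w = w'" using T2[OF tr(3) IH(4) os(3)] w_def by auto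
    have ne: "\<exists>x\<in>set [u, v, w]. x \<noteq> []"
      using nn U(2) V(2) W(2) unfolding col3 hdo_def by (auto split: if_splits)
    have "convolution [u, v, w] = col # cw"
      using conv_Cons[OF ne] U V W IH(1) col3 by simp
    moreover have "good3 p q c u v w" using good3_step[OF q0, of p c u v w] cs IH(5)
      by (simp add: U(2,3) V(2,3) W(2,3))
    ultimately show "\<exists>u v w. col # cw = convolution [u, v, w] \<and> tok S \<delta> FD t1 u \<and> tok S \<delta> FD t2 v \<and> tok S \<delta> FD t3 w
       \<and> good3 p q c u v w" using U(1) V(1) W(1) by (intro exI[of _ u] exI[of _ v] exI[of _ w]) simp
  next
    assume "\<exists>u v w. col # cw = convolution [u, v, w] \<and> tok S \<delta> FD t1 u \<and> tok S \<delta> FD t2 v \<and> tok S \<delta> FD t3 w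
       \<and> good3 p q c u v w"
    then obtain u v w where h: "col # cw = convolution [u, v, w]" "tok S \<delta> FD t1 u" "tok S \<delta> FD t2 v"
      "tok S \<delta> FD t3 w" "good3 p q c u v w" by blast
    have ne: "\<exists>x\<in>set [u, v, w]. x \<noteq> []" using h(1) conv_Nil_iff[of "[u,v,w]"] by auto
    have "col # cw = [hdo u, hdo v, hdo w] # convolution [tl u, tl v, tl w]"
      unfolding h(1) using conv_Cons[OF ne] by simp
    hence cc: "col = [hdo u, hdo v, hdo w]" "cw = convolution [tl u, tl v, tl w]" by auto
    obtain t1' where A1: "tstep \<delta> t1 (hdo u) = Some t1'" "tok S \<delta> FD t1' (tl u)" using T1[OF h(2)] by blast
    obtain t2' where A2: "tstep \<delta> t2 (hdo v) = Some t2'" "tok S \<delta> FD t2' (tl v)" using T1[OF h(3)] by blast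
    obtain t3' where A3: "tstep \<delta> t3 (hdo w) = Some t3'" "tok S \<delta> FD t3' (tl w)" using T1[OF h(4)] by blast
    obtain c' where C: "cstep p q c (oz (hdo u) + oz (hdo v) - oz (hdo w)) = Some c'"
      "good3 p q c' (tl u) (tl v) (tl w)" using good3_step[OF q0] h(5) by blast
    have "nacc (d2 p q \<delta>) (F2 FD) cw (c', t1', t2', t3')"
      using Cons.IH[of c' t1' t2' t3'] A1(2) A2(2) A3(2) C(2) cc(2) by blast
    moreover have nn: "\<exists>oo\<in>set col. oo \<noteq> None" using ne cc(1) unfolding hdo_def by auto
    moreover have "(c', t1', t2', t3') \<in> d2 p q \<delta> (c, t1, t2, t3) col"
      unfolding d2_def mem_Collect_eq
      by (intro exI conjI refl) (use A1 A2 A3 C cc(1) nn in simp_all)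
    ultimately show "nacc (d2 p q \<delta>) (F2 FD) (col # cw) (c, t1, t2, t3)" unfolding nacc_Cons by blast
  qed
qed



lemma tstep_cl: "fst t \<in> QD \<Longrightarrow> (\<forall>s\<in>QD. \<forall>a\<in>S. \<delta> s a \<in> QD) \<Longrightarrow> oo \<in> insert None (Some ` S)
   \<Longrightarrow> tstep \<delta> t oo = Some t' \<Longrightarrow> fst t' \<in> QD"
  by (cases t; cases oo) (auto split: if_splits)

lemma oz_bound: "oo \<in> insert None (Some ` Sigma_q q) \<Longrightarrow> \<bar>oz oo\<bar> \<le> \<bar>q\<bar>"
  by (auto simp: Sigma_q_def)

lemma add_regular:
  assumes pq: "1 + \<bar>p\<bar> < \<bar>q\<bar>"
  shows "fa_rel_recognizable (Sigma_q q) 3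
        {[u, v, w] | u v w. u \<in> Dom p q \<and> v \<in> Dom p q \<and> w \<in> Dom p q \<and>
                             addZ2 (psi p q u) (psi p q v) = psi p q w}"
proof -
  have q0: "q \<noteq> 0" using pq by auto
  obtain QD sD \<delta>D FD where fS: "finite (Sigma_q q)" and DS: "Dom p q \<subseteq> lists (Sigma_q q)" and
    D: "finite (QD::nat set)" "sD \<in> QD" "\<forall>st\<in>QD. \<forall>a\<in>Sigma_q q. \<delta>D st a \<in> QD" "FD \<subseteq> QD"
    "\<forall>w\<in>lists (Sigma_q q). w \<in> Dom p q \<longleftrightarrow> fold (\<lambda>a st. \<delta>D st a) w sD \<in> FD"
    using Dom_regular[OF pq] unfolding fa_recognizable_def by blast
  have tokD: "tok (Sigma_q q) \<delta>D FD (sD, False) u \<longleftrightarrow> u \<in> Dom p q" for u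
    using DS D(5) unfolding tok_def by auto
  let ?R = "{[u, v, w] | u v w. u \<in> Dom p q \<and> v \<in> Dom p q \<and> w \<in> Dom p q \<and>
                             addZ2 (psi p q u) (psi p q v) = psi p q w}"
  let ?CA = "conv_alphabet (Sigma_q q) 3"
  let ?s0 = "((0::int, 0::int), (sD, False), (sD, False), (sD, False))"
  have g3: "good3 p q (0,0) u v w \<longleftrightarrow> addZ2 (psi p q u) (psi p q v) = psi p q w" for u v w
    unfolding good3_def psi_val addZ2_def by (auto simp: prod_eq_iff)
  have lang: "convolution ` ?R = {cw \<in> lists ?CA. nacc (d2 p q \<delta>D) (F2 FD) cw ?s0}"
  proof (rule set_eqI, rule iffI)
    fix cw assume "cw \<in> convolution ` ?R"
    then obtain u v w where h: "cw = convolution [u, v, w]" "u \<in> Dom p q" "v \<in> Dom p q" "w \<in> Dom p q"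
      "addZ2 (psi p q u) (psi p q v) = psi p q w" by blast
    have "convolution [u,v,w] \<in> lists (conv_alphabet (Sigma_q q) (length [u,v,w]))"
      by (rule conv_alph) (use h DS in auto)
    hence "cw \<in> lists ?CA" using h(1) by (simp add: numeral_3_eq_3)
    moreover have "nacc (d2 p q \<delta>D) (F2 FD) cw ?s0"
      using d2_correct[OF q0 calculation] h tokD g3 by blast
    ultimately show "cw \<in> {cw \<in> lists ?CA. nacc (d2 p q \<delta>D) (F2 FD) cw ?s0}" by blast
  next
    fix cw assume "cw \<in> {cw \<in> lists ?CA. nacc (d2 p q \<delta>D) (F2 FD) cw ?s0}"
    hence cw: "cw \<in> lists ?CA" "nacc (d2 p q \<delta>D) (F2 FD) cw ?s0" by auto
    then obtain u v w where h: "cw = convolution [u, v, w]" "tok (Sigma_q q) \<delta>D FD (sD, False) u"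
      "tok (Sigma_q q) \<delta>D FD (sD, False) v" "tok (Sigma_q q) \<delta>D FD (sD, False) w" "good3 p q (0,0) u v w"
      using d2_correct[OF q0 cw(1)] by blast
    hence "[u, v, w] \<in> ?R" using tokD g3 by blast
    thus "cw \<in> convolution ` ?R" using h(1) by blast
  qed
  define E where "E = 3 * \<bar>q\<bar>"
  define Q2 where "Q2 = box (4*\<bar>q\<bar>*E) \<times> (QD \<times> (UNIV::bool set)) \<times> (QD \<times> (UNIV::bool set)) \<times> (QD \<times> (UNIV::bool set))"
  have fQ: "finite Q2" unfolding Q2_def using finite_box D(1) by simp
  have s0: "?s0 \<in> Q2" unfolding Q2_def box_def E_def using D(2) by simp
  have cl: "\<forall>st\<in>Q2. \<forall>col\<in>?CA. d2 p q \<delta>D st col \<subseteq> Q2"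
  proof (intro ballI subsetI)
    fix st col s' assume st: "st \<in> Q2" and col: "col \<in> ?CA" and s': "s' \<in> d2 p q \<delta>D st col"
    obtain c t1 t2 t3 where ste: "st = (c, t1, t2, t3)" by (cases st) auto
    obtain c' t1' t2' t3' where s'e: "s' = (c', t1', t2', t3')" and l3: "length col = 3"
      and tr: "tstep \<delta>D t1 (col!0) = Some t1'" "tstep \<delta>D t2 (col!1) = Some t2'" "tstep \<delta>D t3 (col!2) = Some t3'"
      and cs: "cstep p q c (oz (col!0) + oz (col!1) - oz (col!2)) = Some c'"
      using s' unfolding d2_def ste by auto
    have cm: "col!i \<in> insert None (Some ` Sigma_q q)" if "i < 3" for i
    proof -
      have "col!i \<in> set col" using l3 that by simp
      thus ?thesis using col unfolding conv_alphabet_def by blast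
    qed
    have "\<bar>oz (col!0) + oz (col!1) - oz (col!2)\<bar> \<le> E"
      using oz_bound[OF cm[of 0]] oz_bound[OF cm[of 1]] oz_bound[OF cm[of 2]] unfolding E_def by linarith
    hence "c' \<in> box (4*\<bar>q\<bar>*E)" using box_inv[OF pq _ _ cs] st ste unfolding Q2_def by auto
    moreover have "fst t1' \<in> QD" "fst t2' \<in> QD" "fst t3' \<in> QD"
      using tstep_cl[OF _ D(3) cm tr(1)] tstep_cl[OF _ D(3) cm tr(2)] tstep_cl[OF _ D(3) cm tr(3)] st ste
      unfolding Q2_def by auto
    ultimately show "s' \<in> Q2" unfolding Q2_def s'e by (auto simp: mem_Times_iff)
  qed
  have "fa_recognizable ?CA {cw \<in> lists ?CA. nacc (d2 p q \<delta>D) (F2 FD) cw ?s0}"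
    using nfa_fa(1)[OF finite_conv_alph[OF fS] fQ s0 cl] .
  thus ?thesis unfolding fa_rel_recognizable_def lang .
qed



definition mx :: "int \<Rightarrow> int \<Rightarrow> int \<times> int \<Rightarrow> int \<times> int" where
  "mx p q h = (snd h - p * fst h, q * fst h)"

lemma fst_mx[simp]: "fst (mx p q h) = snd h - p * fst h" by (simp add: mx_def)
lemma snd_mx[simp]: "snd (mx p q h) = q * fst h" by (simp add: mx_def)

definition padd :: "int \<times> int \<Rightarrow> int \<times> int \<Rightarrow> int \<times> int" where
  "padd a b = (fst a + fst b, snd a + snd b)"
definition psub :: "int \<times> int \<Rightarrow> int \<times> int \<Rightarrow> int \<times> int" where
  "psub a b = (fst a - fst b, snd a - snd b)"

lemma mx_lin: "(mx p q ^^ n) (a, b) =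
   (a * fst ((mx p q ^^ n) (1,0)) + b * fst ((mx p q ^^ n) (0,1)),
    a * snd ((mx p q ^^ n) (1,0)) + b * snd ((mx p q ^^ n) (0,1)))"
proof (induction n arbitrary: a b)
  case 0 show ?case by simp
next
  case (Suc n)
  show ?case
    by (simp only: funpow.simps comp_apply Suc.IH[of a b]) (simp add: prod_eq_iff algebra_simps)
qed

lemma mx_psub: "(mx p q ^^ n) (psub a b) = psub ((mx p q ^^ n) a) ((mx p q ^^ n) b)"
proof -
  obtain a1 a2 b1 b2 where ab: "a = (a1,a2)" "b = (b1,b2)" by force
  show ?thesis unfolding psub_def ab fst_conv snd_conv
    by (simp only: mx_lin[where n=n and a="a1-b1" and b="a2-b2"] mx_lin[where n=n and a=a1 and b=a2] mx_lin[where n=n and a=b1 and b=b2])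
       (simp add: algebra_simps)
qed

lemma val_append: "val p q (xs @ ys) = padd (val p q xs) ((mx p q ^^ length xs) (val p q ys))"
proof (induction xs)
  case Nil thus ?case by (simp add: padd_def)
next
  case (Cons a xs)
  obtain r1 r2 where r: "(mx p q ^^ length xs) (val p q ys) = (r1, r2)" by force
  show ?case using Cons r by (simp add: padd_def prod_eq_iff algebra_simps)
qed

lemma psub_padd: "psub (padd c a) (padd c b) = psub a b"
  by (simp add: psub_def padd_def)

lemma funpow_comm: "(f ^^ m) ((f ^^ n) x) = (f ^^ n) ((f ^^ m) x)"
  by (metis add.commute comp_apply funpow_add)

lemma e2_props:
  assumes "coprime p q" "l \<ge> 1"
  shows "coprime (fst ((mx p q ^^ l) (0,1))) q \<and> q dvd snd ((mx p q ^^ l) (0,1))"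
  using assms(2)
proof (induction l rule: dec_induct)
  case base thus ?case by simp
next
  case (step n)
  define f where "f = fst ((mx p q ^^ n) (0,1))"
  define s where "s = snd ((mx p q ^^ n) (0,1))"
  from step.IH obtain k where k: "s = q * k" and cf: "coprime f q" unfolding f_def s_def by blast
  have "gcd q (k * q + (- (p * f))) = gcd q (- (p * f))" by (rule gcd_add_mult)
  moreover have "coprime (p * f) q" using cf assms(1) by simp
  ultimately have "coprime (s - p * f) q"
    unfolding k by (simp add: coprime_iff_gcd_eq_1 gcd.commute algebra_simps)
  thus ?case unfolding f_def s_def by simp
qed

lemma e2_nz:
  assumes "coprime p q" "l \<ge> 1" "\<bar>q\<bar> > 1"
  shows "fst ((mx p q ^^ l) (0,1)) \<noteq> 0"
proof
  assume "fst ((mx p q ^^ l) (0,1)) = 0"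
  hence "coprime 0 q" using e2_props[OF assms(1,2)] by metis
  hence "is_unit q" by simp
  thus False using assms(3) by auto
qed

lemma psub_eq0: "psub a b = (0,0) \<longleftrightarrow> a = b" by (auto simp: psub_def prod_eq_iff)

lemma pump_vals:
  assumes pq: "1 + \<bar>p\<bar> < \<bar>q\<bar>" and fa: "fa_recognizable A L" and inf: "infinite L" and LD: "L \<subseteq> Dom p q"
  shows "\<exists>G l V0 V1 V2. l \<ge> 1 \<and> G \<noteq> (0,0) \<and> V0 \<in> val p q ` L \<and> V1 \<in> val p q ` L \<and> V2 \<in> val p q ` L
     \<and> G = psub V1 V0 \<and> (mx p q ^^ l) G = psub V2 V1"
proof -
  obtain x y z where y: "y \<noteq> []" and all: "\<And>k. x @ concat (replicate k y) @ z \<in> L"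
    using pump[OF fa inf] by blast
  have w0: "x @ z \<in> L" using all[of 0] by simp
  have w1: "x @ y @ z \<in> L" using all[of 1] by simp
  have w2: "x @ y @ y @ z \<in> L" using all[of 2] by (simp add: numeral_2_eq_2)
  let ?F = "mx p q ^^ length x"
  let ?H = "mx p q ^^ length y"
  define W0 where "W0 = val p q z"
  define W1 where "W1 = val p q (y @ z)"
  define W2 where "W2 = val p q (y @ y @ z)"
  have W1e: "W1 = padd (val p q y) (?H W0)" unfolding W1_def W0_def by (rule val_append)
  have W2e: "W2 = padd (val p q y) (?H W1)" unfolding W2_def W1_def by (rule val_append)
  have v0: "val p q (x @ z) = padd (val p q x) (?F W0)" unfolding W0_def by (rule val_append)
  have v1: "val p q (x @ y @ z) = padd (val p q x) (?F W1)" unfolding W1_def by (rule val_append)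
  have v2: "val p q (x @ y @ y @ z) = padd (val p q x) (?F W2)" unfolding W2_def by (rule val_append)
  define G where "G = psub (val p q (x @ y @ z)) (val p q (x @ z))"
  have G: "G = ?F (psub W1 W0)" unfolding G_def v0 v1 psub_padd mx_psub ..
  have "psub (val p q (x @ y @ y @ z)) (val p q (x @ y @ z)) = ?F (psub W2 W1)"
    unfolding v1 v2 psub_padd mx_psub ..
  also have "\<dots> = ?F (?H (psub W1 W0))" unfolding W1e W2e psub_padd mx_psub ..
  also have "\<dots> = ?H G" unfolding G by (rule funpow_comm)
  finally have HG: "?H G = psub (val p q (x @ y @ y @ z)) (val p q (x @ y @ z))" ..
  have "x @ z \<noteq> x @ y @ z" using y by simp
  hence "val p q (x @ y @ z) \<noteq> val p q (x @ z)" using Dom_inj w0 w1 LD by blast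
  hence "G \<noteq> (0,0)" unfolding G_def psub_eq0 .
  moreover have "length y \<ge> 1" using y by (cases y) auto
  ultimately show ?thesis using w0 w1 w2 HG G_def by blast
qed

lemma cyc_xi: "h \<in> cyc xi \<longleftrightarrow> fst h = 0" by (cases h) (auto simp: cyc_def xi_def)
lemma cyc_eta: "h \<in> cyc eta \<longleftrightarrow> snd h = 0" by (cases h) (auto simp: cyc_def eta_def)

lemma infinite_pre:
  assumes pq: "1 + \<bar>p\<bar> < \<bar>q\<bar>" and inf: "infinite S"
  shows "infinite {w \<in> Dom p q. psi p q w \<in> S}"
proof
  assume "finite {w \<in> Dom p q. psi p q w \<in> S}"
  hence "finite (val p q ` {w \<in> Dom p q. psi p q w \<in> S})" by simp
  moreover have "S \<subseteq> val p q ` {w \<in> Dom p q. psi p q w \<in> S}"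
  proof
    fix h assume hS: "h \<in> S"
    obtain w where "w \<in> Dom p q" "val p q w = h" using Dom_ex[OF pq] by blast
    thus "h \<in> val p q ` {w \<in> Dom p q. psi p q w \<in> S}" using hS unfolding psi_val by force
  qed
  ultimately show False using inf finite_subset by blast
qed

lemma nonreg_xi:
  assumes pq: "1 + \<bar>p\<bar> < \<bar>q\<bar>" and cp: "coprime p q"
  shows "\<not> fa_recognizable (Sigma_q q) {w \<in> Dom p q. psi p q w \<in> cyc xi}"
proof
  let ?L = "{w \<in> Dom p q. psi p q w \<in> cyc xi}"
  assume fa: "fa_recognizable (Sigma_q q) ?L"
  have "infinite (range (\<lambda>n::int. (0::int, n)))"
  proof
    assume "finite (range (\<lambda>n::int. (0::int, n)))"
    hence "finite (UNIV :: int set)" by (rule finite_imageD) (auto simp: inj_on_def)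
    thus False by simp
  qed
  moreover have "range (\<lambda>n::int. (0::int, n)) \<subseteq> cyc xi" by (auto simp: cyc_xi)
  ultimately have "infinite (cyc xi)" using finite_subset by blast
  hence inf: "infinite ?L" by (rule infinite_pre[OF pq])
  obtain G l V0 V1 V2 where h: "l \<ge> 1" "G \<noteq> (0,0)" "V0 \<in> val p q ` ?L" "V1 \<in> val p q ` ?L" "V2 \<in> val p q ` ?L"
     "G = psub V1 V0" "(mx p q ^^ l) G = psub V2 V1"
    using pump_vals[OF pq fa inf] by blast
  have f: "fst V0 = 0" "fst V1 = 0" "fst V2 = 0" using h(3,4,5) by (auto simp: cyc_xi psi_val)
  obtain g where g: "G = (0, g)" using h(6) f by (simp add: psub_def)
  hence g0: "g \<noteq> 0" using h(2) by simp
  have "fst ((mx p q ^^ l) G) = g * fst ((mx p q ^^ l) (0,1))"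
    unfolding g by (subst mx_lin) simp
  moreover have "fst ((mx p q ^^ l) G) = 0" using h(7) f by (simp add: psub_def)
  ultimately have "fst ((mx p q ^^ l) (0,1)) = 0" using g0 by simp
  moreover have "\<bar>q\<bar> > 1" using pq by simp
  ultimately show False using e2_nz[OF cp h(1)] by blast
qed

lemma nonreg_eta:
  assumes pq: "1 + \<bar>p\<bar> < \<bar>q\<bar>" and cp: "coprime p q"
  shows "\<not> fa_recognizable (Sigma_q q) {w \<in> Dom p q. psi p q w \<in> cyc eta}"
proof
  let ?L = "{w \<in> Dom p q. psi p q w \<in> cyc eta}"
  assume fa: "fa_recognizable (Sigma_q q) ?L"
  have "infinite (range (\<lambda>n::int. (n, 0::int)))"
  proof
    assume "finite (range (\<lambda>n::int. (n, 0::int)))"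
    hence "finite (UNIV :: int set)" by (rule finite_imageD) (auto simp: inj_on_def)
    thus False by simp
  qed
  moreover have "range (\<lambda>n::int. (n, 0::int)) \<subseteq> cyc eta" by (auto simp: cyc_eta)
  ultimately have "infinite (cyc eta)" using finite_subset by blast
  hence inf: "infinite ?L" by (rule infinite_pre[OF pq])
  obtain G l V0 V1 V2 where h: "l \<ge> 1" "G \<noteq> (0,0)" "V0 \<in> val p q ` ?L" "V1 \<in> val p q ` ?L" "V2 \<in> val p q ` ?L"
     "G = psub V1 V0" "(mx p q ^^ l) G = psub V2 V1"
    using pump_vals[OF pq fa inf] by blast
  have f: "snd V0 = 0" "snd V1 = 0" "snd V2 = 0" using h(3,4,5) by (auto simp: cyc_eta psi_val)
  obtain g where g: "G = (g, 0)" using h(6) f by (simp add: psub_def)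
  hence g0: "g \<noteq> 0" using h(2) by simp
  have "snd ((mx p q ^^ l) G) = g * snd ((mx p q ^^ l) (1,0))"
    unfolding g by (subst mx_lin) simp
  moreover have "snd ((mx p q ^^ l) G) = 0" using h(7) f by (simp add: psub_def)
  ultimately have z: "snd ((mx p q ^^ l) (1,0)) = 0" using g0 by simp
  have "(mx p q ^^ l) (1,0) = (mx p q ^^ Suc l) (0,1)"
    by (simp only: funpow_Suc_right comp_apply) (simp add: mx_def)
  hence "snd ((mx p q ^^ l) (1,0)) = q * fst ((mx p q ^^ l) (0,1))" by simp
  moreover have "\<bar>q\<bar> > 1" using pq by simp
  ultimately show False using e2_nz[OF cp h(1)] z by simp
qed



lemma hdo_tl_eq: "hdo u = hdo v \<Longrightarrow> tl u = tl v \<Longrightarrow> u = v"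
  by (cases u; cases v) (auto simp: hdo_def)

lemma conv_inj: "length ws = length vs \<Longrightarrow> convolution ws = convolution vs \<Longrightarrow> ws = vs"
proof (induction "maxlen ws" arbitrary: ws vs rule: less_induct)
  case less
  show ?case
  proof (cases "\<forall>w\<in>set ws. w = []")
    case True
    hence "convolution vs = []" using less.prems conv_Nil_iff by metis
    hence V: "\<forall>w\<in>set vs. w = []" using conv_Nil_iff by metis
    show ?thesis
    proof (rule nth_equalityI)
      show "length ws = length vs" by (rule less.prems(1))
      fix i assume i: "i < length ws"
      hence "ws ! i = []" using True nth_mem by blast
      moreover have "vs ! i = []" using V i less.prems(1) nth_mem by (metis)
      ultimately show "ws ! i = vs ! i" by simp
    qed
  next
    case False
    hence ne: "\<exists>w\<in>set ws. w \<noteq> []" by blast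
    have "convolution vs \<noteq> []" using less.prems(2) conv_Nil_iff[of ws] False by metis
    hence nev: "\<exists>w\<in>set vs. w \<noteq> []" using conv_Nil_iff by metis
    have e: "map hdo ws # convolution (map tl ws) = map hdo vs # convolution (map tl vs)"
      using conv_Cons[OF ne] conv_Cons[OF nev] less.prems(2) by simp
    have m: "maxlen (map tl ws) < maxlen ws"
      using maxlen_tl[of ws] maxlen_0_iff[of ws] False by auto
    have tl: "map tl ws = map tl vs" using less.hyps[OF m] less.prems(1) e by simp
    have hd: "map hdo ws = map hdo vs" using e by simp
    show ?thesis
    proof (rule nth_equalityI)
      show "length ws = length vs" by (rule less.prems(1))
      fix i assume "i < length ws"
      thus "ws ! i = vs ! i" using tl hd less.prems(1) nth_map
        by (metis hdo_tl_eq)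
    qed
  qed
qed

lemma conv_diag: "convolution [w, w] = map (\<lambda>a. [Some a, Some a]) w"
  unfolding conv_eq by (intro nth_equalityI) auto

lemma rel_lang:
  assumes fa: "fa_rel_recognizable A 2 R" and fin: "finite A" and R2: "R \<subseteq> {ws. length ws = 2}"
  shows "fa_recognizable A {w \<in> lists A. [w, w] \<in> R}"
proof -
  have f: "\<forall>a\<in>A. [Some a, Some a] \<in> conv_alphabet A 2" by (auto simp: conv_alphabet_def)
  have "fa_recognizable A {w \<in> lists A. map (\<lambda>a. [Some a, Some a]) w \<in> convolution ` R}"
    using fa_map[OF fa[unfolded fa_rel_recognizable_def] fin f] .
  moreover have "map (\<lambda>a. [Some a, Some a]) w \<in> convolution ` R \<longleftrightarrow> [w, w] \<in> R" for w
  proof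
    assume "map (\<lambda>a. [Some a, Some a]) w \<in> convolution ` R"
    then obtain ws where "ws \<in> R" "convolution ws = convolution [w,w]" unfolding conv_diag by auto
    moreover hence "ws = [w, w]" using R2 conv_inj[of ws "[w,w]"] by auto
    ultimately show "[w, w] \<in> R" by simp
  qed (simp add: conv_diag[symmetric])
  ultimately show ?thesis by simp
qed

lemma rel_xi:
  assumes pq: "1 + \<bar>p\<bar> < \<bar>q\<bar>" and cp: "coprime p q"
  shows "\<not> fa_rel_recognizable (Sigma_q q) 2
            {[u, v] | u v. u \<in> Dom p q \<and> v \<in> Dom p q \<and> psi p q v = pi_xi (psi p q u)}"
proof
  let ?R = "{[u, v] | u v. u \<in> Dom p q \<and> v \<in> Dom p q \<and> psi p q v = pi_xi (psi p q u)}"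
  assume "fa_rel_recognizable (Sigma_q q) 2 ?R"
  moreover have "finite (Sigma_q q)" unfolding Sigma_q_def by simp
  moreover have "?R \<subseteq> {ws. length ws = 2}" by auto
  ultimately have "fa_recognizable (Sigma_q q) {w \<in> lists (Sigma_q q). [w, w] \<in> ?R}" by (rule rel_lang)
  moreover have "{w \<in> lists (Sigma_q q). [w, w] \<in> ?R} = {w \<in> Dom p q. psi p q w \<in> cyc xi}"
    using Dom_def by (auto simp: cyc_xi pi_xi_def prod_eq_iff)
  ultimately show False using nonreg_xi[OF pq cp] by simp
qed

lemma rel_eta:
  assumes pq: "1 + \<bar>p\<bar> < \<bar>q\<bar>" and cp: "coprime p q"
  shows "\<not> fa_rel_recognizable (Sigma_q q) 2
            {[u, v] | u v. u \<in> Dom p q \<and> v \<in> Dom p q \<and> psi p q v = pi_eta (psi p q u)}"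
proof
  let ?R = "{[u, v] | u v. u \<in> Dom p q \<and> v \<in> Dom p q \<and> psi p q v = pi_eta (psi p q u)}"
  assume "fa_rel_recognizable (Sigma_q q) 2 ?R"
  moreover have "finite (Sigma_q q)" unfolding Sigma_q_def by simp
  moreover have "?R \<subseteq> {ws. length ws = 2}" by auto
  ultimately have "fa_recognizable (Sigma_q q) {w \<in> lists (Sigma_q q). [w, w] \<in> ?R}" by (rule rel_lang)
  moreover have "{w \<in> lists (Sigma_q q). [w, w] \<in> ?R} = {w \<in> Dom p q. psi p q w \<in> cyc eta}"
    using Dom_def by (auto simp: cyc_eta pi_eta_def prod_eq_iff)
  ultimately show False using nonreg_eta[OF pq cp] by simp
qed

theorem theorem1:
  fixes p q :: int
  assumes "1 + \<bar>p\<bar> < \<bar>q\<bar>"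
  shows "fa_recognizable (Sigma_q q) (Dom p q)
    \<and> bij_betw (psi p q) (Dom p q) UNIV
    \<and> fa_rel_recognizable (Sigma_q q) 3
        {[u, v, w] | u v w. u \<in> Dom p q \<and> v \<in> Dom p q \<and> w \<in> Dom p q \<and>
                             addZ2 (psi p q u) (psi p q v) = psi p q w}
    \<and> (gcd p q = 1 \<longrightarrow>
         \<not> fa_recognizable (Sigma_q q) {w \<in> Dom p q. psi p q w \<in> cyc xi}
       \<and> \<not> fa_recognizable (Sigma_q q) {w \<in> Dom p q. psi p q w \<in> cyc eta}
       \<and> \<not> fa_rel_recognizable (Sigma_q q) 2
            {[u, v] | u v. u \<in> Dom p q \<and> v \<in> Dom p q \<and> psi p q v = pi_xi (psi p q u)}
       \<and> \<not> fa_rel_recognizable (Sigma_q q) 2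
            {[u, v] | u v. u \<in> Dom p q \<and> v \<in> Dom p q \<and> psi p q v = pi_eta (psi p q u)})"
  using Dom_regular[OF assms] psi_bij[OF assms] add_regular[OF assms]
    nonreg_xi[OF assms] nonreg_eta[OF assms] rel_xi[OF assms] rel_eta[OF assms]
  by (simp add: coprime_iff_gcd_eq_1)


end
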